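(* Let $A$ be an abelian group of order $n$ and exponent greater than $2$, let $m$ be the number of elements of $A$ of order at most $2$, and let $\iota:A\to A$ be the automorphism $x\mapsto x^{-1}$. Then the number of inverse-closed subsets $S\subseteq A$ such that $\varphi(S)=S$ for some $\varphi\in\mathrm{Aut}(A)\setminus\{1,\iota\}$ is at most $2^{m/2+11n/24+(\log_2 n)^2}$.
   Context: A subset $S$ of a group is inverse-closed if $S^{-1}=S$. *)

theory Defs
  imports "HOL-Algebra.Algebra"
begin

definition group_exponent :: "('a, 'b) monoid_scheme \<Rightarrow> nat" where
  "group_exponent G = (LEAST k. 0 < k \<and> (\<forall>x\<in>carrier G. x [^]\<^bsub>G\<^esub> k = \<one>\<^bsub>G\<^esub>))"

definition inverse_closed :: "('a, 'b) monoid_scheme \<Rightarrow> 'a set \<Rightarrow> bool" where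
  "inverse_closed G S \<longleftrightarrow> (\<lambda>x. inv\<^bsub>G\<^esub> x) ` S = S"

end

theory Submission imports Defs begin

locale autsetup = comm_group G for G (structure) +
  fixes f
  assumes f_iso: "f \<in> iso G G" and fin: "finite (carrier G)"
begin

lemma f_hom: "f \<in> hom G G" using f_iso by (simp add: iso_iff)
lemma f_carr[simp]: "x \<in> carrier G \<Longrightarrow> f x \<in> carrier G"
  using f_hom by (auto simp: hom_def)
lemma f_mult: "x \<in> carrier G \<Longrightarrow> y \<in> carrier G \<Longrightarrow> f (x \<otimes> y) = f x \<otimes> f y"
  using f_hom by (simp add: hom_mult)
lemma f_inv: "x \<in> carrier G \<Longrightarrow> f (inv x) = inv (f x)"
proof -
  interpret gh: group_hom G G f by (simp add: group_hom_def group_hom_axioms_def f_hom is_group)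
  assume "x \<in> carrier G" thus ?thesis by simp
qed
lemma f_inj: "inj_on f (carrier G)" using f_iso by (simp add: iso_iff)
lemma f_eq_iff: "x \<in> carrier G \<Longrightarrow> y \<in> carrier G \<Longrightarrow> f x = f y \<longleftrightarrow> x = y"
  using f_inj by (auto simp: inj_on_def)

lemma fpow_carr[simp]: "x \<in> carrier G \<Longrightarrow> (f^^j) x \<in> carrier G"
  by (induction j) auto
lemma fpow_inv: "x \<in> carrier G \<Longrightarrow> (f^^j) (inv x) = inv ((f^^j) x)"
  by (induction j) (auto simp: f_inv)
lemma fpow_inj: "inj_on (f^^j) (carrier G)"
proof (induction j)
  case 0 then show ?case by simp
next
  case (Suc j)
  show ?case unfolding inj_on_def
    using Suc by (auto simp: inj_on_def f_eq_iff)
qed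
lemma fpow_add: "(f^^(i+j)) x = (f^^i) ((f^^j) x)"
  by (simp add: funpow_add)

lemma periodic: "\<exists>k>0. \<forall>x\<in>carrier G. (f^^k) x = x"
proof -
  let ?g = "\<lambda>j. restrict (f^^j) (carrier G)"
  have "?g ` UNIV \<subseteq> carrier G \<rightarrow>\<^sub>E carrier G" by auto
  moreover have "finite (carrier G \<rightarrow>\<^sub>E carrier G)" using fin by (simp add: finite_PiE)
  ultimately have "finite (?g ` UNIV)" by (rule finite_subset)
  hence "\<not> inj ?g" using finite_imageD by blast
  then obtain a b where ab: "a \<noteq> b" "?g a = ?g b" unfolding inj_def by blast
  have "\<exists>a b. a < b \<and> ?g a = ?g b"
    using ab by (metis linorder_neqE_nat)
  then obtain a b where ab: "a < b" "?g a = ?g b" by blast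
  have "\<forall>x\<in>carrier G. (f^^(b-a)) x = x"
  proof
    fix x assume x: "x \<in> carrier G"
    have "(f^^a) ((f^^(b-a)) x) = (f^^b) x" using ab(1) by (simp flip: fpow_add)
    also have "\<dots> = (f^^a) x" using ab(2) x by (metis restrict_apply')
    finally show "(f^^(b-a)) x = x" using fpow_inj[of a] x by (auto simp: inj_on_def)
  qed
  thus ?thesis using ab(1) by (intro exI[of _ "b-a"]) auto
qed

definition W where "W x = range (\<lambda>j. (f^^j) x) \<union> range (\<lambda>j. inv ((f^^j) x))"

lemma W_carr: "x \<in> carrier G \<Longrightarrow> W x \<subseteq> carrier G"
  by (auto simp: W_def)
lemma W_self: "x \<in> W x" by (auto simp: W_def intro: range_eqI[of _ _ 0])
lemma W_fin: "x \<in> carrier G \<Longrightarrow> finite (W x)"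
  using W_carr fin finite_subset by blast
lemma W_trans: assumes x: "x \<in> carrier G" and y: "y \<in> W x" shows "W y \<subseteq> W x"
proof
  fix z assume z: "z \<in> W y"
  from y obtain j where j: "y = (f^^j) x \<or> y = inv ((f^^j) x)" by (auto simp: W_def)
  from z obtain i where i: "z = (f^^i) y \<or> z = inv ((f^^i) y)" by (auto simp: W_def)
  have fx: "(f^^j) x \<in> carrier G" using x by simp
  show "z \<in> W x"
  proof (cases "y = (f^^j) x")
    case True
    then have "z = (f^^(i+j)) x \<or> z = inv ((f^^(i+j)) x)" using i by (simp add: fpow_add)
    then show ?thesis unfolding W_def by blast
  next
    case False
    then have yy: "y = inv ((f^^j) x)" using j by blast
    then have "(f^^i) y = inv ((f^^(i+j)) x)" using fx by (simp add: fpow_inv fpow_add)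
    then have "z = inv ((f^^(i+j)) x) \<or> z = (f^^(i+j)) x" using i
      by (metis fpow_carr inv_inv x)
    then show ?thesis unfolding W_def by blast
  qed
qed
lemma W_sym: assumes x: "x \<in> carrier G" and y: "y \<in> W x" shows "x \<in> W y"
proof -
  obtain k where k: "k > 0" "\<forall>x\<in>carrier G. (f^^k) x = x" using periodic by blast
  from y obtain j where j: "y = (f^^j) x \<or> y = inv ((f^^j) x)" by (auto simp: W_def)
  have "j+1 \<le> k*(j+1)" using k(1) by (cases k) auto
  hence kj: "k*(j+1) = (k*(j+1) - j) + j" by arith
  have kk: "(f^^(k*n)) z = z" if "z \<in> carrier G" for n z
  proof (induction n)
    case 0 then show ?case by simp
  next
    case (Suc n)
    have "(f^^(k*Suc n)) z = (f^^k) ((f^^(k*n)) z)" by (simp add: fpow_add flip: fpow_add)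
    then show ?case using Suc k(2) that by simp
  qed
  have "(f^^(k*(j+1) - j)) ((f^^j) x) = x" using kk[OF x, of "j+1"] kj
    by (metis fpow_add)
  then have e: "x = (f^^(k*(j+1) - j)) ((f^^j) x)" by simp
  show ?thesis
  proof (cases "y = (f^^j) x")
    case True
    then show ?thesis using e unfolding W_def by (metis UnI1 rangeI)
  next
    case False
    then have yy: "y = inv ((f^^j) x)" using j by blast
    have "inv ((f^^(k*(j+1) - j)) y) = x" using e yy x by (simp add: fpow_inv)
    then show ?thesis unfolding W_def by (metis UnI2 rangeI)
  qed
qed

definition h :: "'a \<Rightarrow> nat" where "h = (SOME h. inj_on h (carrier G))"
lemma h_inj: "inj_on h (carrier G)"
proof -
  have "\<exists>h::'a\<Rightarrow>nat. inj_on h (carrier G)" using finite_imp_inj_to_nat_seg[OF fin] by blast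
  thus ?thesis unfolding h_def by (rule someI_ex)
qed

definition R where "R = {x \<in> carrier G. \<forall>w\<in>W x. h x \<le> h w}"

lemma R_carr: "R \<subseteq> carrier G" by (auto simp: R_def)
lemma R_eq: assumes "x \<in> R" "y \<in> R" "y \<in> W x" shows "x = y"
proof -
  have "x \<in> W y" using W_sym assms R_def by auto
  hence "h x = h y" using assms unfolding R_def by (auto intro: antisym)
  thus ?thesis using h_inj assms R_carr by (auto simp: inj_on_def)
qed
lemma R_disj: assumes "x \<in> R" "y \<in> R" "x \<noteq> y" shows "W x \<inter> W y = {}"
proof (rule ccontr)
  assume "W x \<inter> W y \<noteq> {}"
  then obtain z where z: "z \<in> W x" "z \<in> W y" by blast
  have xc: "x \<in> carrier G" "y \<in> carrier G" using assms R_carr by auto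
  have "y \<in> W z" using W_sym[OF xc(2) z(2)] .
  hence "y \<in> W x" using W_trans[OF xc(1) z(1)] by blast
  thus False using R_eq assms by blast
qed
lemma R_rep: assumes y: "y \<in> carrier G" shows "\<exists>z\<in>R. z \<in> W y"
proof -
  have "finite (W y)" "W y \<noteq> {}" using W_fin[OF y] W_self by auto
  then obtain z where z: "z \<in> W y" "\<forall>w\<in>W y. h z \<le> h w"
    using ex_min_if_finite[of "h ` W y"] 
    by (metis (no_types, lifting) arg_min_if_finite(1) arg_min_least  not_le)
  have zc: "z \<in> carrier G" using z W_carr y by auto
  have "W z \<subseteq> W y" using W_trans[OF y z(1)] .
  hence "z \<in> R" using z zc unfolding R_def by auto
  thus ?thesis using z by blast
qed

lemma inv_S: assumes "S \<subseteq> carrier G" "(\<lambda>x. inv x) ` S = S" "x \<in> carrier G"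
  shows "inv x \<in> S \<longleftrightarrow> x \<in> S"
  using assms by (metis image_eqI inv_inv subsetD)
lemma f_S: assumes "S \<subseteq> carrier G" "f ` S = S" "x \<in> carrier G"
  shows "f x \<in> S \<longleftrightarrow> x \<in> S"
proof
  assume "f x \<in> S"
  then obtain s where "s \<in> S" "f s = f x" using assms(2) by (metis imageE)
  thus "x \<in> S" using f_eq_iff assms by auto
next
  assume "x \<in> S" thus "f x \<in> S" using assms(2) by blast
qed
lemma fpow_S: assumes "S \<subseteq> carrier G" "f ` S = S" "x \<in> carrier G"
  shows "(f^^j) x \<in> S \<longleftrightarrow> x \<in> S"
  using assms by (induction j) (auto simp: f_S)
lemma W_S: assumes "S \<subseteq> carrier G" "f ` S = S" "(\<lambda>x. inv x) ` S = S" "y \<in> carrier G" "w \<in> W y"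
  shows "w \<in> S \<longleftrightarrow> y \<in> S"
proof -
  from assms(5) obtain j where "w = (f^^j) y \<or> w = inv ((f^^j) y)" by (auto simp: W_def)
  thus ?thesis using fpow_S[OF assms(1,2,4)] inv_S[OF assms(1,3)] assms(4) by auto
qed

lemma fam_card: "card {S. S \<subseteq> carrier G \<and> (\<lambda>x. inv x) ` S = S \<and> f ` S = S} \<le> 2 ^ card R"
proof -
  let ?F = "{S. S \<subseteq> carrier G \<and> (\<lambda>x. inv x) ` S = S \<and> f ` S = S}"
  have inj: "inj_on (\<lambda>S. S \<inter> R) ?F"
  proof (rule inj_onI)
    fix S S' assume S: "S \<in> ?F" and S': "S' \<in> ?F" and eq: "S \<inter> R = S' \<inter> R"
    show "S = S'"
    proof (rule Set.set_eqI)
      fix y show "y \<in> S \<longleftrightarrow> y \<in> S'"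
      proof (cases "y \<in> carrier G")
        case True
        then obtain z where z: "z \<in> R" "z \<in> W y" using R_rep by blast
        have "y \<in> S \<longleftrightarrow> z \<in> S" using W_S[of S y z] S True z by auto
        also have "\<dots> \<longleftrightarrow> z \<in> S'" using eq z by blast
        also have "\<dots> \<longleftrightarrow> y \<in> S'" using W_S[of S' y z] S' True z by auto
        finally show ?thesis .
      next
        case False then show ?thesis using S S' by auto
      qed
    qed
  qed
  have "(\<lambda>S. S \<inter> R) ` ?F \<subseteq> Pow R" by auto
  moreover have "finite R" using R_carr fin finite_subset by blast
  ultimately have "card ?F \<le> card (Pow R)"
    using card_inj_on_le[OF inj] by (meson finite_Pow_iff)
  thus ?thesis by (simp add: card_Pow \<open>finite R\<close>)
qed

definition Iv where "Iv = {x \<in> carrier G. inv x = x}"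
definition Cf where "Cf = {x \<in> carrier G. f x = x}"
definition Df where "Df = {x \<in> carrier G. f x = inv x}"
definition v :: "'a \<Rightarrow> nat" where
  "v y = 1 + (if y \<in> Iv then 1 else 0) + (if y \<in> Cf then 1 else 0) + (if y \<in> Df then 1 else 0)"
definition T where "T x = {x, inv x, f x, inv (f x)}"

lemma T_W: "x \<in> carrier G \<Longrightarrow> T x \<subseteq> W x"
proof -
  assume x: "x \<in> carrier G"
  have "x = (f^^0) x" "f x = (f^^1) x" by auto
  thus ?thesis unfolding T_def W_def by (metis (no_types, lifting) UnI1 UnI2 empty_subsetI insert_subset rangeI)
qed

lemma T_sum: assumes x: "x \<in> carrier G" shows "4 \<le> sum v (T x)"
proof -
  have finT: "finite (T x)" by (simp add: T_def)
  have fI: "f x \<in> Iv \<longleftrightarrow> x \<in> Iv"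
    using x f_inv f_eq_iff[of "inv x" x] unfolding Iv_def by auto
  consider "x \<in> Iv" "x \<in> Cf" | "x \<in> Iv" "x \<notin> Cf" | "x \<notin> Iv" "x \<in> Cf \<or> x \<in> Df"
    | "x \<notin> Iv" "x \<notin> Cf" "x \<notin> Df" by blast
  then show ?thesis
  proof cases
    case 1
    then have "x \<in> Df" unfolding Iv_def Cf_def Df_def by auto
    then have "v x = 4" using 1 by (simp add: v_def)
    moreover have "v x \<le> sum v (T x)" using finT by (intro member_le_sum) (auto simp: T_def)
    ultimately show ?thesis by simp
  next
    case 2
    have ne: "f x \<noteq> x" using 2 x by (auto simp: Cf_def)
    have "f x \<in> Iv" using fI 2 by simp
    moreover have "f x \<notin> Cf" using ne x f_eq_iff[of "f x" x] by (auto simp: Cf_def)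
    moreover have "f x \<notin> Df" using ne x \<open>f x \<in> Iv\<close> f_eq_iff[of "f x" x] by (auto simp: Cf_def Df_def Iv_def)
    ultimately have "v (f x) = 2" by (simp add: v_def)
    moreover have "v x \<ge> 2" using 2 by (simp add: v_def)
    moreover have "sum v {x, f x} \<le> sum v (T x)" using finT by (intro sum_mono2) (auto simp: T_def)
    ultimately show ?thesis using ne by simp
  next
    case 3
    have ne: "inv x \<noteq> x" using 3 x by (auto simp: Iv_def)
    have "inv x \<in> Cf \<or> inv x \<in> Df" using 3 x f_inv by (auto simp: Cf_def Df_def)
    then have "v (inv x) \<ge> 2" by (auto simp: v_def)
    moreover have "v x \<ge> 2" using 3 by (auto simp: v_def)
    moreover have "sum v {x, inv x} \<le> sum v (T x)" using finT by (intro sum_mono2) (auto simp: T_def)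
    ultimately show ?thesis using ne by simp
  next
    case 4
    have fx: "f x \<in> carrier G" using x by simp
    have d1: "x \<noteq> inv x" using 4 x by (auto simp: Iv_def)
    have d2: "x \<noteq> f x" using 4 x by (auto simp: Cf_def)
    have d3: "x \<noteq> inv (f x)" using 4 x fx by (metis (mono_tags, lifting) Df_def inv_inv mem_Collect_eq)
    have d4: "inv x \<noteq> f x" using 4 x by (auto simp: Df_def)
    have d5: "inv x \<noteq> inv (f x)" using 4 x fx by (metis (mono_tags, lifting) Cf_def inv_inv mem_Collect_eq)
    have d6: "f x \<noteq> inv (f x)" using 4 fI fx by (auto simp: Iv_def)
    have "card (T x) = 4" using d1 d2 d3 d4 d5 d6 by (simp add: T_def)
    moreover have "sum (\<lambda>_. 1) (T x) \<le> sum v (T x)" by (intro sum_mono) (simp add: v_def)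
    ultimately show ?thesis by simp
  qed
qed

lemma finR: "finite R" using R_carr fin finite_subset by blast

lemma four_R: "4 * card R \<le> sum v (carrier G)"
proof -
  have "4 * card R = (\<Sum>x\<in>R. 4)" by simp
  also have "\<dots> \<le> (\<Sum>x\<in>R. sum v (T x))" using R_carr T_sum by (intro sum_mono) auto
  also have "\<dots> = sum v (\<Union>x\<in>R. T x)"
  proof (rule sum.UNION_disjoint[symmetric])
    show "finite R" by (rule finR)
    show "\<forall>x\<in>R. finite (T x)" by (simp add: T_def)
    show "\<forall>x\<in>R. \<forall>y\<in>R. x \<noteq> y \<longrightarrow> T x \<inter> T y = {}"
      using R_disj T_W R_carr by blast
  qed
  also have "\<dots> \<le> sum v (carrier G)"
    using fin T_W W_carr R_carr by (intro sum_mono2) (auto simp: subset_iff) 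
  finally show ?thesis .
qed

lemma sum_v: "sum v (carrier G) = card (carrier G) + card Iv + card Cf + card Df"
proof -
  have a: "sum (\<lambda>y. if y \<in> P then 1 else 0) (carrier G) = card P" if "P \<subseteq> carrier G" for P :: "'a set"
  proof -
    have "sum (\<lambda>y. if y \<in> P then 1 else 0) (carrier G) = sum (\<lambda>y. 1::nat) {y\<in>carrier G. y \<in> P}"
      using sum.inter_filter[OF fin, of "\<lambda>y. 1::nat" "\<lambda>y. y \<in> P"] by simp
    also have "{y\<in>carrier G. y \<in> P} = P" using that by auto
    finally show ?thesis by simp
  qed
  have "sum v (carrier G) = sum (\<lambda>y. 1) (carrier G) + sum (\<lambda>y. if y \<in> Iv then 1 else 0) (carrier G)
     + sum (\<lambda>y. if y \<in> Cf then 1 else 0) (carrier G) + sum (\<lambda>y. if y \<in> Df then 1 else 0) (carrier G)"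
    unfolding v_def sum.distrib by (rule refl)
  also have "\<dots> = card (carrier G) + card Iv + card Cf + card Df"
    using a[of Iv] a[of Cf] a[of Df] by (simp add: Iv_def Cf_def Df_def subset_iff)
  finally show ?thesis .
qed

end

lemma (in group) double_lemma:
  assumes H: "subgroup H G" and HK: "H \<subseteq> K" and K: "K \<subseteq> carrier G" "finite K"
    and g: "g \<in> K" "g \<notin> H" and cl: "\<forall>x\<in>H. x \<otimes> g \<in> K"
  shows "2 * card H \<le> card K"
proof -
  have Hc: "H \<subseteq> carrier G" using subgroup.subset[OF H] .
  have gc: "g \<in> carrier G" using g K by auto
  have inj: "inj_on (\<lambda>x. x \<otimes> g) H"
    using Hc gc by (auto simp: inj_on_def subset_iff)
  have disj: "H \<inter> (\<lambda>x. x \<otimes> g) ` H = {}"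
  proof (rule ccontr)
    assume "H \<inter> (\<lambda>x. x \<otimes> g) ` H \<noteq> {}"
    then obtain x where x: "x \<in> H" "x \<otimes> g \<in> H" by blast
    have "inv x \<otimes> (x \<otimes> g) \<in> H" using x H by (simp add: subgroup.m_closed subgroup.m_inv_closed)
    moreover have "inv x \<otimes> (x \<otimes> g) = g" using x Hc gc by (simp add: m_assoc[symmetric] subsetD)
    ultimately show False using g by simp
  qed
  have finH: "finite H" using HK K finite_subset by blast
  have "card (H \<union> (\<lambda>x. x \<otimes> g) ` H) = card H + card ((\<lambda>x. x \<otimes> g) ` H)"
    using disj finH by (simp add: card_Un_disjoint)
  also have "\<dots> = 2 * card H" using card_image[OF inj] by simp
  finally have e: "card (H \<union> (\<lambda>x. x \<otimes> g) ` H) = 2 * card H" .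
  have "H \<union> (\<lambda>x. x \<otimes> g) ` H \<subseteq> K" using HK cl by auto
  hence "card (H \<union> (\<lambda>x. x \<otimes> g) ` H) \<le> card K" using K(2) by (rule card_mono[rotated])
  thus ?thesis using e by simp
qed

lemma (in group) half_lemma:
  assumes "subgroup H G" "finite (carrier G)" "H \<noteq> carrier G"
  shows "2 * card H \<le> card (carrier G)"
proof -
  have "H \<subseteq> carrier G" using subgroup.subset[OF assms(1)] .
  then obtain g where "g \<in> carrier G" "g \<notin> H" using assms(3) by blast
  thus ?thesis using double_lemma[OF assms(1) \<open>H \<subseteq> carrier G\<close> _ assms(2)] \<open>H \<subseteq> carrier G\<close>
    by auto
qed

lemma (in comm_group) prod_lemma:
  assumes H: "subgroup H G" and K: "subgroup K G" and fin: "finite (carrier G)"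
  shows "card H * card K \<le> card (carrier G) * card (H \<inter> K)"
proof -
  have Hc: "H \<subseteq> carrier G" and Kc: "K \<subseteq> carrier G"
    using subgroup.subset H K by auto
  let ?fib = "\<lambda>z. {p \<in> H \<times> K. fst p \<otimes> snd p = z}"
  have cover: "H \<times> K = (\<Union>z\<in>carrier G. ?fib z)" using Hc Kc by (auto simp: subset_iff)
  have fibc: "card (?fib z) \<le> card (H \<inter> K)" if z: "z \<in> carrier G" for z
  proof (cases "?fib z = {}")
    case True then show ?thesis by (metis card.empty le0)
  next
    case False
    then obtain x0 y0 where p0: "x0 \<in> H" "y0 \<in> K" "x0 \<otimes> y0 = z" by auto
    have x0c: "x0 \<in> carrier G" "y0 \<in> carrier G" using p0 Hc Kc by auto
    have inj: "inj_on (\<lambda>p. fst p \<otimes> inv x0) (?fib z)"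
    proof (rule inj_onI)
      fix p q assume p: "p \<in> ?fib z" and q: "q \<in> ?fib z" and e: "fst p \<otimes> inv x0 = fst q \<otimes> inv x0"
      have pc: "fst p \<in> carrier G" "snd p \<in> carrier G" "fst q \<in> carrier G" "snd q \<in> carrier G"
        using p q Hc Kc by auto
      have f: "fst p = fst q" using e pc x0c by simp
      have "fst p \<otimes> snd p = fst p \<otimes> snd q" using p q f by simp
      hence "snd p = snd q" using pc by simp
      thus "p = q" using f by (simp add: prod_eq_iff)
    qed
    have "(\<lambda>p. fst p \<otimes> inv x0) ` (?fib z) \<subseteq> H \<inter> K"
    proof
      fix w assume "w \<in> (\<lambda>p. fst p \<otimes> inv x0) ` (?fib z)"
      then obtain x y where xy: "x \<in> H" "y \<in> K" "x \<otimes> y = z" "w = x \<otimes> inv x0" by auto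
      have xyc: "x \<in> carrier G" "y \<in> carrier G" using xy Hc Kc by auto
      have "w \<in> H" using xy p0 H by (simp add: subgroup.m_closed subgroup.m_inv_closed)
      moreover have "w = y0 \<otimes> inv y"
      proof -
        have "x \<otimes> y = x0 \<otimes> y0" using xy p0 by simp
        moreover have "x = x \<otimes> y \<otimes> inv y" using xyc by (simp add: m_assoc)
        ultimately have a: "x = x0 \<otimes> y0 \<otimes> inv y" by simp
        have "x0 \<otimes> y0 \<otimes> inv y \<otimes> inv x0 = x0 \<otimes> (y0 \<otimes> inv y) \<otimes> inv x0"
          using xyc x0c by (simp add: m_assoc)
        also have "\<dots> = inv x0 \<otimes> (x0 \<otimes> (y0 \<otimes> inv y))"
          using xyc x0c by (intro m_comm) auto
        also have "\<dots> = y0 \<otimes> inv y" using xyc x0c by (simp add: m_assoc[symmetric])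
        finally show ?thesis using a xy(4) by simp
      qed
      hence "w \<in> K" using xy p0 K by (simp add: subgroup.m_closed subgroup.m_inv_closed)
      ultimately show "w \<in> H \<inter> K" by blast
    qed
    moreover have "finite (H \<inter> K)" using Hc fin finite_subset by blast
    ultimately show ?thesis using card_inj_on_le[OF inj] by blast
  qed
  have "card H * card K = card (H \<times> K)" by (simp add: card_cartesian_product)
  also have "\<dots> = card (\<Union>z\<in>carrier G. ?fib z)" using cover by (rule arg_cong)
  also have "\<dots> \<le> (\<Sum>z\<in>carrier G. card (?fib z))" by (rule card_UN_le[OF fin])
  also have "\<dots> \<le> (\<Sum>z\<in>carrier G. card (H \<inter> K))" using fibc by (intro sum_mono) auto
  also have "\<dots> = card (carrier G) * card (H \<inter> K)" by simp
  finally show ?thesis .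
qed


lemma arith_lemma:
  fixes rr nn ii cc dd ee mm :: real
  assumes "4 * rr \<le> nn + ii + cc + dd" "ii \<le> mm" "ee \<le> mm" "2 * cc \<le> nn" "2 * dd \<le> nn" "cc * dd \<le> nn * ee"
    "cc \<ge> 0" "dd \<ge> 0" "nn \<ge> 0" "mm \<ge> 0"
  shows "rr \<le> mm / 2 + 11 * nn / 24"
proof -
  have key: "tt \<le> mm + nn / 3" if "tt \<ge> 0" "tt * tt \<le> nn * mm" for tt
  proof (rule ccontr)
    assume "\<not> tt \<le> mm + nn / 3"
    hence lt: "mm + nn / 3 < tt" by simp
    have "(mm + nn / 3) * (mm + nn / 3) < tt * tt" using lt assms(9,10) by (intro mult_strict_mono) auto
    moreover have "(mm + nn / 3) * (mm + nn / 3) - nn * mm \<ge> 0"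
    proof -
      have "(mm + nn / 3) * (mm + nn / 3) - nn * mm = (mm - nn / 3) * (mm-nn / 3) + nn * mm / 3" by (simp add: algebra_simps)
      moreover have "(mm - nn / 3) * (mm-nn / 3) \<ge> 0" by simp
      moreover have "nn * mm / 3 \<ge> 0" using assms(9,10) by simp
      ultimately show ?thesis by linarith
    qed
    ultimately show False using that by linarith
  qed
  have ne: "nn * ee \<le> nn * mm" using assms(3,9) by (simp add: mult_left_mono)
  have "cc + dd \<le> mm + 5 * nn / 6"
  proof (cases "cc \<le> dd")
    case True
    have "cc * cc \<le> cc * dd" using True assms(7) by (simp add: mult_left_mono)
    hence "cc \<le> mm + nn / 3" using key[of cc] assms(6,7) ne by linarith
    thus ?thesis using assms(5) by linarith
  next
    case False
    have "dd * dd \<le> cc * dd" using False assms(8) by (simp add: mult_right_mono)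
    hence "dd \<le> mm + nn / 3" using key[of dd] assms(6,8) ne by linarith
    thus ?thesis using assms(4) by linarith
  qed
  thus ?thesis using assms(1,2) by linarith
qed

context autsetup begin

lemma f_one: "f \<one> = \<one>"
proof -
  interpret gh: group_hom G G f by (simp add: group_hom_def group_hom_axioms_def f_hom is_group)
  show ?thesis by simp
qed

lemma Cf_sub: "subgroup Cf G"
  by (rule subgroupI) (auto simp: Cf_def f_inv f_mult intro!: exI[of _ \<one>] f_one)

lemma Df_sub: "subgroup Df G"
  by (rule subgroupI) (auto simp: Df_def f_inv f_mult inv_mult intro!: exI[of _ \<one>] f_one)

lemma CD_I: "Cf \<inter> Df \<subseteq> Iv" by (auto simp: Cf_def Df_def Iv_def)

lemma I_M: "Iv \<subseteq> {x \<in> carrier G. ord x \<le> 2}"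
proof
  fix x assume x: "x \<in> Iv"
  hence xc: "x \<in> carrier G" and e: "inv x = x" by (auto simp: Iv_def)
  have "x [^] (2::nat) = x \<otimes> x" using xc by (simp add: numeral_2_eq_2)
  also have "\<dots> = x \<otimes> inv x" using e by simp
  also have "\<dots> = \<one>" using xc by simp
  finally have "ord x dvd 2" using pow_eq_id[OF xc] by simp
  hence "ord x \<le> 2" by (simp add: dvd_imp_le)
  thus "x \<in> {x \<in> carrier G. ord x \<le> 2}" using xc by simp
qed

lemma fam_bound:
  assumes "\<exists>x\<in>carrier G. f x \<noteq> x" "\<exists>x\<in>carrier G. f x \<noteq> inv x"
  shows "real (card {S. S \<subseteq> carrier G \<and> (\<lambda>x. inv x) ` S = S \<and> f ` S = S})
     \<le> 2 powr (real (card {x \<in> carrier G. ord x \<le> 2}) / 2 + 11 * real (card (carrier G)) / 24)"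
proof -
  let ?M = "{x \<in> carrier G. ord x \<le> 2}"
  have finM: "finite ?M" using fin by simp
  have Cne: "Cf \<noteq> carrier G" using assms(1) by (auto simp: Cf_def)
  have Dne: "Df \<noteq> carrier G" using assms(2) by (auto simp: Df_def)
  have c: "2 * card Cf \<le> card (carrier G)" by (rule half_lemma[OF Cf_sub fin Cne])
  have d: "2 * card Df \<le> card (carrier G)" by (rule half_lemma[OF Df_sub fin Dne])
  have cd: "card Cf * card Df \<le> card (carrier G) * card (Cf \<inter> Df)"
    by (rule prod_lemma[OF Cf_sub Df_sub fin])
  have i: "card Iv \<le> card ?M" using I_M finM by (rule card_mono[rotated])
  have e: "card (Cf \<inter> Df) \<le> card ?M" using CD_I I_M finM by (meson card_mono order_trans)
  have r: "4 * card R \<le> card (carrier G) + card Iv + card Cf + card Df"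
    using four_R sum_v by simp
  have "real (card R) \<le> real (card ?M)/2 + 11 * real (card (carrier G))/24"
  proof (rule arith_lemma[where ii="real (card Iv)" and cc="real (card Cf)" and dd="real (card Df)" and ee = "real (card (Cf \<inter> Df))"])
    show "4 * real (card R) \<le> real (card (carrier G)) + real (card Iv) + real (card Cf) + real (card Df)"
      using r by (simp flip: of_nat_add of_nat_mult)
    show "real (card Cf) * real (card Df) \<le> real (card (carrier G)) * real (card (Cf \<inter> Df))"
      using cd by (simp flip: of_nat_mult)
  qed (use i e c d in auto)
  moreover have "real (card {S. S \<subseteq> carrier G \<and> (\<lambda>x. inv x) ` S = S \<and> f ` S = S}) \<le> 2 powr real (card R)"
  proof -
    have "real (card {S. S \<subseteq> carrier G \<and> (\<lambda>x. inv x) ` S = S \<and> f ` S = S}) \<le> real ((2::nat) ^ card R)"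
      using fam_card by (simp only: of_nat_le_iff)
    also have "real ((2::nat) ^ card R) = 2 powr real (card R)" by (simp add: powr_realpow)
    finally show ?thesis .
  qed
  ultimately show ?thesis by (meson order_trans powr_mono one_le_numeral)
qed

end

lemma (in group) gen_set:
  assumes fin: "finite (carrier G)"
  shows "\<exists>gs. gs \<subseteq> carrier G \<and> finite gs \<and> generate G gs = carrier G \<and> 2 ^ card gs \<le> card (carrier G)"
proof -
  have P: "\<exists>gs. gs \<subseteq> carrier G \<and> finite gs \<and> 2 ^ card gs \<le> card (generate G gs)
             \<and> (generate G gs = carrier G \<or> k \<le> card gs)" for k
  proof (induction k)
    case 0
    have "{\<one>} \<subseteq> generate G {}" by (auto intro: generate.one)
    moreover have "finite (generate G {})" using generate_incl[of "{}"] fin finite_subset by blast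
    ultimately have "card {\<one>} \<le> card (generate G {})" by (rule card_mono[rotated])
    hence "1 \<le> card (generate G {})" by simp
    thus ?case by (intro exI[of _ "{}"]) auto
  next
    case (Suc k)
    then obtain gs where gs: "gs \<subseteq> carrier G" "finite gs" "2 ^ card gs \<le> card (generate G gs)"
       "generate G gs = carrier G \<or> k \<le> card gs" by blast
    show ?case
    proof (cases "generate G gs = carrier G")
      case True then show ?thesis using gs by blast
    next
      case False
      have Hc: "generate G gs \<subseteq> carrier G" using generate_incl[OF gs(1)] .
      then obtain g where g: "g \<in> carrier G" "g \<notin> generate G gs" using False by blast
      have gsH: "gs \<subseteq> generate G gs" by (auto intro: generate.incl)
      have gn: "g \<notin> gs" using g gsH by blast
      let ?gs' = "insert g gs"
      have sub': "?gs' \<subseteq> carrier G" using gs g by auto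
      have Kc: "generate G ?gs' \<subseteq> carrier G" using generate_incl[OF sub'] .
      have HK: "generate G gs \<subseteq> generate G ?gs'" by (rule mono_generate) auto
      have gK: "g \<in> generate G ?gs'" by (auto intro: generate.incl)
      have cl: "\<forall>x\<in>generate G gs. x \<otimes> g \<in> generate G ?gs'"
        using HK gK by (auto intro: generate.eng)
      have "2 * card (generate G gs) \<le> card (generate G ?gs')"
        by (rule double_lemma[OF generate_is_subgroup[OF gs(1)] HK Kc finite_subset[OF Kc fin] gK g(2) cl])
      moreover have "card ?gs' = Suc (card gs)" using gn gs(2) by simp
      ultimately have "2 ^ card ?gs' \<le> card (generate G ?gs')" using gs(3) by simp
      moreover have "Suc k \<le> card ?gs'" using gs(4) False gn gs(2) by simp
      ultimately show ?thesis using sub' gs(2) by blast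
    qed
  qed
  obtain gs where gs: "gs \<subseteq> carrier G" "finite gs" "2 ^ card gs \<le> card (generate G gs)"
       "generate G gs = carrier G \<or> Suc (card (carrier G)) \<le> card gs" using P by blast
  have le: "card (generate G gs) \<le> card (carrier G)" using generate_incl[OF gs(1)] fin by (rule card_mono[rotated])
  have "generate G gs = carrier G"
  proof (rule ccontr)
    assume "generate G gs \<noteq> carrier G"
    hence "Suc (card (carrier G)) \<le> card gs" using gs(4) by blast
    moreover have "card gs < 2 ^ card gs" by (rule less_exp)
    ultimately show False using gs(3) le by linarith
  qed
  thus ?thesis using gs le by (metis order_trans)
qed

lemma (in group) hom_agree:
  assumes hp: "p \<in> hom G G" and hq: "q \<in> hom G G" and gs: "gs \<subseteq> carrier G" "generate G gs = carrier G"
    and eq: "\<forall>g\<in>gs. p g = q g"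
  shows "\<forall>x\<in>carrier G. p x = q x"
proof -
  interpret gp: group_hom G G p by (simp add: group_hom_def group_hom_axioms_def hp is_group)
  interpret gq: group_hom G G q by (simp add: group_hom_def group_hom_axioms_def hq is_group)
  let ?E = "{x \<in> carrier G. p x = q x}"
  have "subgroup ?E G"
  proof (rule subgroupI)
    show "?E \<subseteq> carrier G" by auto
    show "?E \<noteq> {}" using gp.hom_one gq.hom_one by (metis (mono_tags, lifting) empty_iff mem_Collect_eq one_closed)
    show "inv a \<in> ?E" if "a \<in> ?E" for a using that by simp
    show "a \<otimes> b \<in> ?E" if "a \<in> ?E" "b \<in> ?E" for a b using that by simp
  qed
  hence "generate G gs \<subseteq> ?E" using eq gs(1) by (intro generate_subgroup_incl) auto
  thus ?thesis using gs(2) by auto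
qed

lemma powr_bound:
  fixes n k :: nat
  assumes "1 \<le> n" "2 ^ k \<le> n"
  shows "real n ^ k \<le> 2 powr ((log 2 (real n))\<^sup>2)"
proof -
  let ?L = "log 2 (real n)"
  have n0: "real n > 0" using assms by simp
  have L0: "0 \<le> ?L" using assms by simp
  have "real k = log 2 (2 ^ k)" by (simp add: log_nat_power)
  also have "\<dots> \<le> ?L"
  proof -
    have "real (2^k) \<le> real n" using assms(2) by (simp only: of_nat_le_iff)
    hence h: "(2::real)^k \<le> real n" by simp
    show ?thesis using log_le_cancel_iff[of 2 "2^k" "real n"] h n0 by simp
  qed
  finally have kL: "real k \<le> ?L" .
  have "real n ^ k = real n powr real k" using n0 by (simp add: powr_realpow)
  also have "\<dots> = (2 powr ?L) powr real k" using n0 by simp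
  also have "\<dots> = 2 powr (?L * real k)" by (simp add: powr_powr)
  also have "\<dots> \<le> 2 powr (?L * ?L)" using kL L0 by (intro powr_mono mult_left_mono) auto
  also have "?L * ?L = ?L\<^sup>2" by (simp add: power2_eq_square)
  finally show ?thesis .
qed


theorem lemma5p5:
  fixes A :: "('a, 'b) monoid_scheme" and n m :: nat
  assumes "comm_group A"
    and "finite (carrier A)"
    and "n = card (carrier A)"
    and "group_exponent A > 2"
    and "m = card {x \<in> carrier A. group.ord A x \<le> 2}"
  shows "real (card {S. S \<subseteq> carrier A \<and> inverse_closed A S \<and>
            (\<exists>\<phi> \<in> iso A A. (\<exists>x\<in>carrier A. \<phi> x \<noteq> x) \<and>
                          (\<exists>x\<in>carrier A. \<phi> x \<noteq> inv\<^bsub>A\<^esub> x) \<and> \<phi> ` S = S)})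
         \<le> 2 powr (real m / 2 + 11 * real n / 24 + (log 2 (real n))\<^sup>2)"
proof -
  interpret cg: comm_group A by (rule assms(1))
  have fin: "finite (carrier A)" by (rule assms(2))
  let ?F = "{S. S \<subseteq> carrier A \<and> inverse_closed A S \<and>
            (\<exists>\<phi> \<in> iso A A. (\<exists>x\<in>carrier A. \<phi> x \<noteq> x) \<and>
                          (\<exists>x\<in>carrier A. \<phi> x \<noteq> inv\<^bsub>A\<^esub> x) \<and> \<phi> ` S = S)}"
  let ?Phi = "{\<phi> \<in> iso A A. (\<exists>x\<in>carrier A. \<phi> x \<noteq> x) \<and> (\<exists>x\<in>carrier A. \<phi> x \<noteq> inv\<^bsub>A\<^esub> x)}"
  let ?Psi = "(\<lambda>\<phi>. restrict \<phi> (carrier A)) ` ?Phi"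
  let ?Fam = "\<lambda>\<psi>. {S. S \<subseteq> carrier A \<and> (\<lambda>x. inv\<^bsub>A\<^esub> x) ` S = S \<and> \<psi> ` S = S}"
  define Bnd where "Bnd = real m / 2 + 11 * real n / 24"
  have resimg: "restrict \<phi> (carrier A) ` S = \<phi> ` S" if "S \<subseteq> carrier A" for \<phi> S
    using that by (auto simp: image_def)
  have sub: "?F \<subseteq> (\<Union>\<psi>\<in>?Psi. ?Fam \<psi>)"
  proof
    fix S assume "S \<in> ?F"
    then obtain \<phi> where S: "S \<subseteq> carrier A" "inverse_closed A S" "\<phi> \<in> ?Phi" "\<phi> ` S = S" by auto
    have r: "restrict \<phi> (carrier A) ` S = S" by (rule trans[OF resimg[OF S(1)] S(4)])
    have "S \<in> ?Fam (restrict \<phi> (carrier A))" using S(1,2) r unfolding inverse_closed_def by blast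
    thus "S \<in> (\<Union>\<psi>\<in>?Psi. ?Fam \<psi>)" using S(3) by blast
  qed
  have PsiPi: "?Psi \<subseteq> carrier A \<rightarrow>\<^sub>E carrier A"
    by (auto simp: iso_iff hom_def)
  have finPsi: "finite ?Psi" using finite_subset[OF PsiPi] fin by (simp add: finite_PiE)
  have finFam: "finite (?Fam \<psi>)" for \<psi>
    using fin by (rule rev_finite_subset[OF finite_Pow_iff[THEN iffD2]]) auto
  have famb: "real (card (?Fam \<psi>)) \<le> 2 powr Bnd" if psi: "\<psi> \<in> ?Psi" for \<psi>
  proof -
    obtain \<phi> where ph: "\<phi> \<in> ?Phi" "\<psi> = restrict \<phi> (carrier A)" using psi by blast
    interpret au: autsetup A \<phi> by (unfold_locales) (use ph fin in auto)
    have e: "\<psi> ` S = \<phi> ` S" if "S \<subseteq> carrier A" for S unfolding ph(2) by (rule resimg[OF that])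
    have "?Fam \<psi> = ?Fam \<phi>"
    proof (rule Collect_cong)
      fix S
      show "(S \<subseteq> carrier A \<and> (\<lambda>x. inv\<^bsub>A\<^esub> x) ` S = S \<and> \<psi> ` S = S) \<longleftrightarrow>
            (S \<subseteq> carrier A \<and> (\<lambda>x. inv\<^bsub>A\<^esub> x) ` S = S \<and> \<phi> ` S = S)"
        using e[of S] by (metis (no_types))
    qed
    moreover have "real (card (?Fam \<phi>)) \<le> 2 powr Bnd"
      using au.fam_bound ph(1) unfolding Bnd_def assms(3,5) by blast
    ultimately show ?thesis by simp
  qed
  obtain gs where gs: "gs \<subseteq> carrier A" "finite gs" "generate A gs = carrier A" "2 ^ card gs \<le> card (carrier A)"
    using cg.gen_set[OF fin] by blast
  have inj: "inj_on (\<lambda>\<psi>. restrict \<psi> gs) ?Psi"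
  proof (rule inj_onI)
    fix p q assume p: "p \<in> ?Psi" and q: "q \<in> ?Psi" and e: "restrict p gs = restrict q gs"
    obtain p0 where p0: "p0 \<in> ?Phi" "p = restrict p0 (carrier A)" using p by blast
    obtain q0 where q0: "q0 \<in> ?Phi" "q = restrict q0 (carrier A)" using q by blast
    have "\<forall>g\<in>gs. p0 g = q0 g"
    proof
      fix g assume g: "g \<in> gs"
      have "restrict p gs g = restrict q gs g" using e by simp
      thus "p0 g = q0 g" using g gs(1) p0 q0 by auto
    qed
    hence "\<forall>x\<in>carrier A. p0 x = q0 x"
      using cg.hom_agree[of p0 q0 gs] p0 q0 gs by (auto simp: iso_iff)
    thus "p = q" using p0 q0 by (auto simp: restrict_def)
  qed
  have "(\<lambda>\<psi>. restrict \<psi> gs) ` ?Psi \<subseteq> gs \<rightarrow>\<^sub>E carrier A"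
    using gs(1) by (auto simp: iso_iff hom_def)
  hence "card ?Psi \<le> card (gs \<rightarrow>\<^sub>E carrier A)"
    using card_inj_on_le[OF inj] gs(2) fin by (simp add: finite_PiE)
  hence cPsi: "card ?Psi \<le> n ^ card gs" using gs(2) assms(3) by (simp add: card_PiE)
  have n1: "1 \<le> n" using assms(3) fin cg.one_closed by (metis card_0_eq empty_iff less_one not_le)
  have cPsi': "real (card ?Psi) \<le> 2 powr ((log 2 (real n))\<^sup>2)"
  proof -
    have "real (card ?Psi) \<le> real (n ^ card gs)" using cPsi by (simp only: of_nat_le_iff)
    also have "\<dots> = real n ^ card gs" by simp
    also have "\<dots> \<le> 2 powr ((log 2 (real n))\<^sup>2)" using powr_bound[OF n1] gs(4) assms(3) by simp
    finally show ?thesis .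
  qed
  have "card ?F \<le> card (\<Union>\<psi>\<in>?Psi. ?Fam \<psi>)"
    by (rule card_mono[OF _ sub], rule finite_UN_I[OF finPsi finFam])
  also have "\<dots> \<le> (\<Sum>\<psi>\<in>?Psi. card (?Fam \<psi>))" by (rule card_UN_le[OF finPsi])
  finally have "real (card ?F) \<le> (\<Sum>\<psi>\<in>?Psi. real (card (?Fam \<psi>)))"
    by (simp flip: of_nat_sum)
  also have "\<dots> \<le> (\<Sum>\<psi>\<in>?Psi. 2 powr Bnd)" using famb by (intro sum_mono) auto
  also have "\<dots> = real (card ?Psi) * 2 powr Bnd" by simp
  also have "\<dots> \<le> 2 powr ((log 2 (real n))\<^sup>2) * 2 powr Bnd"
    using cPsi' by (intro mult_right_mono) auto
  also have "\<dots> = 2 powr (real m / 2 + 11 * real n / 24 + (log 2 (real n))\<^sup>2)"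
    unfolding Bnd_def by (simp add: powr_add[symmetric] algebra_simps)
  finally show ?thesis .
qed

end
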